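(* The composition map $(c,d)\mapsto c\circ d$, restricted to $\mathtt{CA}\times\mathtt{SUR}$, is continuous from $(\mathtt{CA},\delta)\times(\mathtt{SUR},\delta)$ to $(\mathtt{CA},\delta)$.
   Context: $\Sigma$ is a finite alphabet with $|\Sigma|\ge2$. For $r\in\mathbb{N}$, $N(r)=[-r,r]\subseteq\mathbb{Z}$. A cellular automaton (CA) $c:\Sigma^\mathbb{Z}\to\Sigma^\mathbb{Z}$ is a map given by a local function $F:\Sigma^{N(r)}\to\Sigma$ via $c(x)_i=F(x_{[i-r,i+r]})$ for some $r\in\mathbb{N}$ (any such $r$ is a radius of $c$; the minimal one is $r(c)$); equivalently, a continuous shift-commuting map. $\mathtt{CA}$ is the set of all CA on $\Sigma^\mathbb{Z}$ and $\mathtt{SUR}$ the set of surjective ones. For $c,d\in\mathtt{CA}$ and a common radius $r$, the difference set is $D^c_d=\{w\in\Sigma^{N(r)}\mid c(x)_0\ne d(x)_0 \text{ for } x \text{ with } x_{[-r,r]}=w\}$ (i.e. the words on which the local rules of $c$ and $d$ give different central outputs), and the metric is $\delta(c,d)=|D^c_d|/|\Sigma|^{2r+1}$, which does not depend on the choice of $r$. $(\mathtt{CA},\delta)$ is called the uniform Bernoulli space. *)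

theory Defs
  imports Complex_Main "HOL-Library.FuncSet"
begin

definition N :: "nat \<Rightarrow> int set" where
  "N r = {- int r .. int r}"

definition has_radius :: "((int \<Rightarrow> 'a) \<Rightarrow> (int \<Rightarrow> 'a)) \<Rightarrow> nat \<Rightarrow> bool" where
  "has_radius c r \<longleftrightarrow>
     (\<exists>F :: (int \<Rightarrow> 'a) \<Rightarrow> 'a. \<forall>x i. c x i = F (restrict (\<lambda>j. x (i + j)) (N r)))"

definition CA :: "((int \<Rightarrow> 'a) \<Rightarrow> (int \<Rightarrow> 'a)) set" where
  "CA = {c. \<exists>r. has_radius c r}"

definition SUR :: "((int \<Rightarrow> 'a) \<Rightarrow> (int \<Rightarrow> 'a)) set" where
  "SUR = {c \<in> CA. surj c}"

definition rad :: "((int \<Rightarrow> 'a) \<Rightarrow> (int \<Rightarrow> 'a)) \<Rightarrow> nat" where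
  "rad c = (LEAST r. has_radius c r)"

definition diff_set :: "nat \<Rightarrow> ((int \<Rightarrow> 'a) \<Rightarrow> (int \<Rightarrow> 'a)) \<Rightarrow> ((int \<Rightarrow> 'a) \<Rightarrow> (int \<Rightarrow> 'a))
    \<Rightarrow> (int \<Rightarrow> 'a) set" where
  "diff_set r c d = {w \<in> N r \<rightarrow>\<^sub>E (UNIV :: 'a set).
      \<exists>x. restrict x (N r) = w \<and> c x 0 \<noteq> d x 0}"

definition delta :: "((int \<Rightarrow> 'a::finite) \<Rightarrow> (int \<Rightarrow> 'a)) \<Rightarrow> ((int \<Rightarrow> 'a) \<Rightarrow> (int \<Rightarrow> 'a)) \<Rightarrow> real" where
  "delta c d = real (card (diff_set (max (rad c) (rad d)) c d))
      / real (card (UNIV :: 'a set)) ^ (2 * max (rad c) (rad d) + 1)"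

end

theory Submission
  imports Defs
begin

definition W :: "nat \<Rightarrow> 'a list set" where "W n = {xs. length xs = n}"

lemma card_W: "card (W n :: 'a::finite list set) = card (UNIV::'a set) ^ n"
  using card_lists_length_eq[of "UNIV::'a set" n] by (simp add: W_def)

lemma finite_W[simp]: "finite (W n :: 'a::finite list set)"
  using finite_lists_length_eq[of "UNIV::'a set" n] by (simp add: W_def)

definition img :: "('a list \<Rightarrow> 'a) \<Rightarrow> nat \<Rightarrow> 'a list \<Rightarrow> 'a list" where
  "img f s X = map (\<lambda>i. f (take (2*s+1) (drop i X))) [0..<length X - 2*s]"

lemma length_img[simp]: "length (img f s X) = length X - 2*s"
  by (simp add: img_def)

lemma take_img: "n + 2*s \<le> length X \<Longrightarrow> take n (img f s X) = img f s (take (n+2*s) X)"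
proof (rule nth_equalityI)
  assume h: "n + 2*s \<le> length X"
  show "length (take n (img f s X)) = length (img f s (take (n+2*s) X))" using h by simp
  fix i assume "i < length (take n (img f s X))"
  then have i: "i < n" using h by simp
  have "take (2*s+1) (drop i (take (n+2*s) X)) = take (2*s+1) (drop i X)"
    using i by (simp add: drop_take min_def)
  then show "take n (img f s X) ! i = img f s (take (n+2*s) X) ! i"
  proof -
    have "i < length X - 2*s" using i h by simp
    then show ?thesis using i h \<open>take (2*s+1) (drop i (take (n+2*s) X)) = _\<close> by (simp add: img_def)
  qed
qed

lemma drop_img: "drop m (img f s X) = img f s (drop m X)"
  by (rule nth_equalityI) (auto simp: img_def add.commute)

lemma card_mid:
  assumes "S \<subseteq> W m"
  shows "card {X :: 'a::finite list. length X = a+m+b \<and> take m (drop a X) \<in> S}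
     = card (UNIV::'a set)^(a+b) * card S"
proof -
  have eq: "{X :: 'a list. length X = a+m+b \<and> take m (drop a X) \<in> S}
     = (\<lambda>(A,Y,B). A@Y@B) ` (W a \<times> S \<times> W b)"
  proof (safe)
    fix X :: "'a list" assume "length X = a+m+b" "take m (drop a X) \<in> S"
    moreover have "X = take a X @ take m (drop a X) @ drop (a+m) X"
      by (metis append_take_drop_id drop_drop add.commute)
    ultimately show "X \<in> (\<lambda>(A,Y,B). A@Y@B) ` (W a \<times> S \<times> W b)"
      by (intro image_eqI[where x="(take a X, take m (drop a X), drop (a+m) X)"])
        (auto simp: W_def)
  next
    fix A Y B :: "'a list" assume "A \<in> W a" "Y \<in> S" "B \<in> W b"
    with assms show "length (A@Y@B) = a+m+b" "take m (drop a (A@Y@B)) \<in> S"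
      by (auto simp: W_def)
  qed
  have inj: "inj_on (\<lambda>(A,Y,B). A@Y@B) (W a \<times> S \<times> W b)"
    using assms by (auto simp: inj_on_def W_def)
  have "finite S" using assms finite_subset finite_W by blast
  show ?thesis unfolding eq card_image[OF inj]
    by (simp add: card_cartesian_product card_W power_add)
qed


fun goodW :: "'a list \<Rightarrow> nat \<Rightarrow> nat \<Rightarrow> 'a list \<Rightarrow> bool" where
  "goodW v s 0 Z = True"
| "goodW v s (Suc k) Z = (take (length v) Z = v \<and> goodW v s k (drop (length v + 2*s) Z))"

lemma pow_bound: "(a::nat)^k * (a+k) \<le> (a+1)^k * a"
proof (induction k)
  case 0 then show ?case by simp
next
  case (Suc k)
  have "a^(Suc k) * (a + Suc k) \<le> (a+1) * (a^k * (a+k))"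
    by (simp add: algebra_simps)
  also have "\<dots> \<le> (a+1) * ((a+1)^k * a)" by (rule mult_left_mono[OF Suc.IH]) simp
  finally show ?case by (simp add: algebra_simps)
qed

lemma pow_contra:
  assumes "\<forall>k. (Q::nat)^k \<le> p^k * Q" "Q \<ge> 1"
  shows "Q \<le> p"
proof (rule ccontr)
  assume "\<not> Q \<le> p"
  then have pa: "p \<le> Q - 1" by simp
  define a where "a = Q - 1"
  have Qa: "Q = a + 1" using assms(2) a_def by simp
  show False
  proof (cases "a = 0")
    case True
    then have "p = 0" using pa a_def by simp
    then show False using assms(1)[rule_format, of 1] True Qa by simp
  next
    case False
    define k where "k = a*Q"
    have "Q^k \<le> p^k * Q" using assms(1) by blast
    also have "\<dots> \<le> a^k * Q" using pa a_def by (simp add: power_mono)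
    finally have h: "Q^k \<le> a^k * Q" .
    have "a^k * (a+k) \<le> Q^k * a" using pow_bound[of a k] Qa by simp
    also have "\<dots> \<le> a^k * Q * a" using h by simp
    finally have "a^k * (a+k) \<le> a^k * (Q * a)" by (simp add: ac_simps)
    then have "a + k \<le> Q * a" using False by simp
    then show False using False k_def by (simp add: ac_simps)
  qed
qed

context
  fixes f :: "'a::finite list \<Rightarrow> 'a" and s :: nat
  assumes surjL: "\<And>v. \<exists>X. length X = length v + 2*s \<and> img f s X = v"
begin

definition P :: "'a list \<Rightarrow> 'a list set" where
  "P v = {X. length X = length v + 2*s \<and> img f s X = v}"

definition C :: "'a list \<Rightarrow> nat \<Rightarrow> 'a list set" where
  "C v k = {X. length X = k*(length v + 2*s) + 2*s \<and> goodW v s k (img f s X)}"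

definition B :: "'a list \<Rightarrow> nat \<Rightarrow> 'a list set" where
  "B v k = {Y. length Y = k*(length v + 2*s) \<and> goodW v s k Y}"

lemma finite_P: "finite (P v)"
  by (rule finite_subset[OF _ finite_W[of "length v + 2*s"]]) (auto simp: P_def W_def)

lemma finite_P'[simp]: "finite {X. length X = length v + 2*s \<and> img f s X = v}"
  using finite_P[of v] by (simp add: P_def)

lemma finite_C: "finite (C v k)"
  by (rule finite_subset[OF _ finite_W[of "k*(length v + 2*s) + 2*s"]]) (auto simp: C_def W_def)

lemma card_C: "card (C v k) = card (P v)^k * card (UNIV::'a set)^(2*s)"
proof (induction k)
  case 0
  have "C v 0 = W (2*s)" by (auto simp: C_def W_def)
  then show ?case by (simp add: card_W)
next
  case (Suc k)
  let ?m = "length v + 2*s"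
  have eq: "C v (Suc k) = (\<lambda>(A,B). A@B) ` (P v \<times> C v k)"
  proof safe
    fix X assume X: "X \<in> C v (Suc k)"
    then have len: "length X = ?m + (k*?m + 2*s)" by (simp add: C_def)
    have t: "take (length v) (img f s X) = img f s (take ?m X)"
      using len by (intro take_img) simp
    have d: "drop ?m (img f s X) = img f s (drop ?m X)" by (rule drop_img)
    show "X \<in> (\<lambda>(A,B). A@B) ` (P v \<times> C v k)"
      apply (rule image_eqI[where x="(take ?m X, drop ?m X)"])
      using X len t d by (auto simp: C_def P_def)
  next
    fix A B :: "'a list" assume A: "A \<in> P v" and B: "B \<in> C v k"
    let ?X = "A @ B"
    have lA: "length A = ?m" using A by (simp add: P_def)
    have lX: "length ?X = ?m + (k*?m + 2*s)" using A B by (simp add: P_def C_def)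
    have t: "take (length v) (img f s ?X) = img f s (take ?m ?X)"
      using lX by (intro take_img) simp
    have d: "drop ?m (img f s ?X) = img f s (drop ?m ?X)" by (rule drop_img)
    show "A @ B \<in> C v (Suc k)"
      using lX t d lA A B by (simp add: C_def P_def)
  qed
  have inj: "inj_on (\<lambda>(A,B). A@B) (P v \<times> C v k)"
    by (auto simp: inj_on_def P_def)
  show ?case unfolding eq card_image[OF inj] card_cartesian_product Suc by simp
qed

lemma card_B: "card (B v k) = card (UNIV::'a set)^(2*s*k)"
proof (induction k)
  case 0
  have "B v 0 = {[]}" by (auto simp: B_def)
  then show ?case by simp
next
  case (Suc k)
  let ?m = "length v + 2*s"
  have eq: "B v (Suc k) = (\<lambda>(g,Y). v@g@Y) ` (W (2*s) \<times> B v k)"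
  proof safe
    fix Y assume Y: "Y \<in> B v (Suc k)"
    have "Y = take (length v) Y @ take (2*s) (drop (length v) Y) @ drop ?m Y"
      by (metis append_take_drop_id drop_drop add.commute)
    then show "Y \<in> (\<lambda>(g,Y). v@g@Y) ` (W (2*s) \<times> B v k)"
      using Y by (intro image_eqI[where x="(take (2*s) (drop (length v) Y), drop ?m Y)"])
        (auto simp: B_def W_def)
  next
    fix g Y :: "'a list" assume "g \<in> W (2*s)" "Y \<in> B v k"
    then show "v @ g @ Y \<in> B v (Suc k)" by (auto simp: B_def W_def)
  qed
  have inj: "inj_on (\<lambda>(g,Y). v@g@Y) (W (2*s) \<times> B v k)"
    by (auto simp: inj_on_def W_def)
  show ?case unfolding eq card_image[OF inj] card_cartesian_product Suc
    by (simp add: card_W power_add)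
qed

lemma B_sub: "B v k \<subseteq> img f s ` C v k"
proof
  fix Y assume Y: "Y \<in> B v k"
  obtain X where X: "length X = length Y + 2*s" "img f s X = Y" using surjL by blast
  show "Y \<in> img f s ` C v k"
    using X Y by (intro image_eqI[where x=X]) (auto simp: B_def C_def)
qed

lemma P_ge: "card (UNIV::'a set)^(2*s) \<le> card (P v)"
proof (rule pow_contra)
  have "0 < card (UNIV::'a set)" by (simp add: card_gt_0_iff)
  then show "1 \<le> card (UNIV::'a set)^(2*s)" by simp
  show "\<forall>k. (card (UNIV::'a set) ^ (2 * s)) ^ k \<le> card (P v) ^ k * card (UNIV::'a set) ^ (2 * s)"
  proof
    fix k
    have "(card (UNIV::'a set) ^ (2 * s)) ^ k = card (B v k)" by (simp add: card_B power_mult)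
    also have "\<dots> \<le> card (img f s ` C v k)" using B_sub by (intro card_mono) (auto intro: finite_C)
    also have "\<dots> \<le> card (C v k)" by (intro card_image_le finite_C)
    finally show "(card (UNIV::'a set) ^ (2 * s)) ^ k \<le> card (P v) ^ k * card (UNIV::'a set) ^ (2 * s)"
      by (simp add: card_C)
  qed
qed

lemma P_eq:
  assumes "length v = n"
  shows "card (P v) = card (UNIV::'a set)^(2*s)"
proof -
  let ?Q = "card (UNIV::'a set)^(2*s)"
  have U: "W (n + 2*s) = (\<Union>v\<in>W n. P v)"
    by (auto simp: W_def P_def)
  have "card (W (n + 2*s) :: 'a list set) = (\<Sum>v\<in>W n. card (P v))"
    unfolding U by (rule card_UN_disjoint) (auto simp: finite_P P_def)
  moreover have "(\<Sum>v\<in>(W n :: 'a list set). ?Q) = card (W n :: 'a list set) * ?Q" by simp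
  ultimately have S: "(\<Sum>v\<in>W n. card (P v)) = (\<Sum>v\<in>(W n :: 'a list set). ?Q)"
    by (simp add: card_W power_add)
  show ?thesis
  proof (rule ccontr)
    assume "card (P v) \<noteq> ?Q"
    then have "?Q < card (P v)" using P_ge[of v] by simp
    then have "(\<Sum>v\<in>(W n :: 'a list set). ?Q) < (\<Sum>v\<in>W n. card (P v))"
      using assms P_ge by (intro sum_strict_mono_ex1) (auto simp: W_def[symmetric], auto simp: W_def)
    then show False using S by simp
  qed
qed

lemma balance:
  assumes "A \<subseteq> W n"
  shows "card {X. length X = n + 2*s \<and> img f s X \<in> A} = card A * card (UNIV::'a set)^(2*s)"
proof -
  have fA: "finite A" using assms finite_subset finite_W by blast
  have U: "{X. length X = n + 2*s \<and> img f s X \<in> A} = (\<Union>v\<in>A. P v)"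
    using assms by (auto simp: W_def P_def)
  have "card (\<Union>v\<in>A. P v) = (\<Sum>v\<in>A. card (P v))"
    by (rule card_UN_disjoint) (auto simp: fA finite_P P_def)
  also have "\<dots> = (\<Sum>v\<in>A. card (UNIV::'a set)^(2*s))"
    using assms by (intro sum.cong refl P_eq) (auto simp: W_def)
  finally show ?thesis unfolding U by simp
qed

end

definition cfg :: "int \<Rightarrow> 'a list \<Rightarrow> int \<Rightarrow> 'a" where
  "cfg a xs i = xs ! nat (i - a)"

lemma hr_loc:
  assumes "has_radius c s" "\<forall>j. i - int s \<le> j \<and> j \<le> i + int s \<longrightarrow> x j = y j"
  shows "c x i = c y i"
proof -
  obtain F where F: "\<forall>x i. c x i = F (restrict (\<lambda>j. x (i + j)) (N s))"
    using assms(1) by (auto simp: has_radius_def)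
  have "restrict (\<lambda>j. x (i + j)) (N s) = restrict (\<lambda>j. y (i + j)) (N s)"
    using assms(2) by (intro restrict_ext) (auto simp: N_def)
  then show ?thesis using F by metis
qed

lemma hr_mono:
  assumes "has_radius c r" "r \<le> r'"
  shows "has_radius c r'"
proof -
  obtain F where F: "\<forall>x i. c x i = F (restrict (\<lambda>j. x (i + j)) (N r))"
    using assms(1) by (auto simp: has_radius_def)
  have sub: "N r \<subseteq> N r'" using assms(2) by (auto simp: N_def)
  show ?thesis unfolding has_radius_def
    by (rule exI[where x="\<lambda>w. F (restrict w (N r))"])
      (use F sub in \<open>auto simp: restrict_restrict Int_absorb1 Int_absorb2 inf.absorb2 inf.absorb1\<close>)
qed

lemma hr_comp:
  assumes "has_radius c r" "has_radius d s"
  shows "has_radius (c \<circ> d) (r+s)"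
proof -
  obtain F where F: "\<forall>x i. c x i = F (restrict (\<lambda>j. x (i + j)) (N r))"
    using assms(1) by (auto simp: has_radius_def)
  obtain G where G: "\<forall>x i. d x i = G (restrict (\<lambda>j. x (i + j)) (N s))"
    using assms(2) by (auto simp: has_radius_def)
  show ?thesis unfolding has_radius_def
  proof (rule exI[where x="\<lambda>w. F (\<lambda>j\<in>N r. G (\<lambda>k\<in>N s. w (j + k)))"], intro allI)
    fix x i
    have "(c \<circ> d) x i = F (restrict (\<lambda>j. d x (i + j)) (N r))" using F by simp
    also have "restrict (\<lambda>j. d x (i + j)) (N r)
      = (\<lambda>j\<in>N r. G (\<lambda>k\<in>N s. restrict (\<lambda>j. x (i + j)) (N (r + s)) (j + k)))"
    proof (rule restrict_ext)
      fix j assume j: "j \<in> N r"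
      have "d x (i + j) = G (restrict (\<lambda>k. x (i + j + k)) (N s))" using G by simp
      also have "restrict (\<lambda>k. x (i + j + k)) (N s) = (\<lambda>k\<in>N s. restrict (\<lambda>j. x (i + j)) (N (r + s)) (j + k))"
        using j by (intro restrict_ext) (auto simp: N_def ac_simps)
      finally show "d x (i + j) = G (\<lambda>k\<in>N s. restrict (\<lambda>j. x (i + j)) (N (r + s)) (j + k))" .
    qed
    finally show "(c \<circ> d) x i = F (\<lambda>j\<in>N r. G (\<lambda>k\<in>N s. restrict (\<lambda>j. x (i + j)) (N (r + s)) (j + k)))" .
  qed
qed

lemma window:
  assumes "has_radius d s" "a \<le> i - int s" "i + int s < a + int (length X)"
  shows "d (cfg a X) i = d (cfg (- int s) (take (2*s+1) (drop (nat (i - int s - a)) X))) 0"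
proof -
  obtain F where F: "\<forall>x i. d x i = F (restrict (\<lambda>j. x (i + j)) (N s))"
    using assms(1) by (auto simp: has_radius_def)
  have "restrict (\<lambda>j. cfg a X (i + j)) (N s)
      = restrict (\<lambda>j. cfg (- int s) (take (2*s+1) (drop (nat (i - int s - a)) X)) (0 + j)) (N s)"
  proof (rule restrict_ext)
    fix j assume j: "j \<in> N s"
    then have j1: "- int s \<le> j" "j \<le> int s" by (auto simp: N_def)
    have e: "nat (i + j - a) = nat (i - int s - a) + nat (j + int s)" using j1 assms by simp
    have l: "nat (j + int s) < 2*s+1" using j1 by simp
    have l2: "nat (i - int s - a) + nat (j + int s) < length X" using j1 assms by simp
    show "cfg a X (i + j) = cfg (- int s) (take (2*s+1) (drop (nat (i - int s - a)) X)) (0 + j)"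
      unfolding cfg_def using e l l2 by simp
  qed
  then show ?thesis using F by metis
qed

definition lf :: "((int \<Rightarrow> 'a) \<Rightarrow> (int \<Rightarrow> 'a)) \<Rightarrow> nat \<Rightarrow> 'a list \<Rightarrow> 'a" where
  "lf d s Y = d (cfg (- int s) Y) 0"

lemma img_nth:
  assumes "has_radius d s" "k < length X - 2*s"
  shows "img (lf d s) s X ! k = d (cfg 0 X) (int k + int s)"
  using window[OF assms(1), of 0 "int k + int s" X] assms(2)
  by (simp add: img_def lf_def)

lemma surj_list:
  assumes "has_radius d s" "surj d"
  shows "\<exists>X. length X = length v + 2*s \<and> img (lf d s) s X = v"
proof -
  obtain x where x: "d x = cfg 0 v" using assms(2) by (metis surjD)
  define X where "X = map (\<lambda>i. x (int i - int s)) [0..<length v + 2*s]"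
  have "img (lf d s) s X = v"
  proof (rule nth_equalityI)
    show "length (img (lf d s) s X) = length v" by (simp add: X_def)
    fix k assume k: "k < length (img (lf d s) s X)"
    then have k': "k < length X - 2*s" by simp
    have "img (lf d s) s X ! k = d (cfg 0 X) (int k + int s)" by (rule img_nth[OF assms(1) k'])
    also have "\<dots> = d (\<lambda>j. x (j - int s)) (int k + int s)"
      using k' by (intro hr_loc[OF assms(1)]) (auto simp: cfg_def X_def)
    also have "\<dots> = d x (int k)"
    proof -
      obtain F where F: "\<forall>x i. d x i = F (restrict (\<lambda>j. x (i + j)) (N s))"
        using assms(1) by (auto simp: has_radius_def)
      show ?thesis using F by (simp add: ac_simps)
    qed
    also have "\<dots> = v ! k" by (simp add: x cfg_def)
    finally show "img (lf d s) s X ! k = v ! k" .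
  qed
  then show ?thesis by (intro exI[of _ X]) (simp add: X_def)
qed


definition cnt :: "nat \<Rightarrow> ((int \<Rightarrow> 'a) \<Rightarrow> bool) \<Rightarrow> nat" where
  "cnt T G = card {Y. length Y = 2*T+1 \<and> G (cfg (- int T) Y)}"

lemma refine:
  fixes G :: "(int \<Rightarrow> 'a::finite) \<Rightarrow> bool"
  assumes loc: "\<forall>x y. (\<forall>j. - int r \<le> j \<and> j \<le> int r \<longrightarrow> x j = y j) \<longrightarrow> G x = G y"
    and rT: "r \<le> T"
  shows "cnt T G = card (UNIV::'a set)^(2*(T-r)) * cnt r G"
proof -
  let ?S = "{Y. length Y = 2*r+1 \<and> G (cfg (- int r) Y)}"
  have sub: "?S \<subseteq> W (2*r+1)" by (auto simp: W_def)
  have eq: "{Y. length Y = 2*T+1 \<and> G (cfg (- int T) Y)}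
     = {X. length X = (T-r)+(2*r+1)+(T-r) \<and> take (2*r+1) (drop (T-r) X) \<in> ?S}"
  proof -
    have "G (cfg (- int T) X) = G (cfg (- int r) (take (2*r+1) (drop (T-r) X)))"
      if "length X = 2*T+1" for X :: "'a list"
    proof -
      have "\<forall>j. - int r \<le> j \<and> j \<le> int r \<longrightarrow>
          cfg (- int T) X j = cfg (- int r) (take (2*r+1) (drop (T-r) X)) j"
      proof (intro allI impI)
        fix j assume j: "- int r \<le> j \<and> j \<le> int r"
        have "int ((T - r) + nat (j + int r)) = j + int T" using j rT by simp
        then have e: "nat (j + int T) = (T - r) + nat (j + int r)" by (metis nat_int)
        show "cfg (- int T) X j = cfg (- int r) (take (2*r+1) (drop (T-r) X)) j"
        proof -
          have l: "nat (j + int r) < 2*r+1" using j by (simp add: nat_less_iff)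
          have "take (2*r+1) (drop (T-r) X) ! nat (j + int r) = X ! ((T-r) + nat (j+int r))"
            using l that rT by simp
          then show ?thesis using e by (simp add: cfg_def)
        qed
      qed
      then show ?thesis using loc by blast
    qed
    then show ?thesis using rT by auto
  qed
  show ?thesis unfolding cnt_def eq card_mid[OF sub]
    by (simp add: mult_2)
qed

lemma rad_hr: "c \<in> CA \<Longrightarrow> has_radius c (rad c)"
  unfolding CA_def rad_def by (auto intro: LeastI_ex)

lemma loc_diff:
  assumes "has_radius c r" "has_radius d r"
  shows "\<forall>x y. (\<forall>j. - int r \<le> j \<and> j \<le> int r \<longrightarrow> x j = y j) \<longrightarrow> (c x 0 \<noteq> d x 0) = (c y 0 \<noteq> d y 0)"
proof (intro allI impI)
  fix x y :: "int \<Rightarrow> 'a" assume "\<forall>j. - int r \<le> j \<and> j \<le> int r \<longrightarrow> x j = y j"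
  then have "c x 0 = c y 0" "d x 0 = d y 0"
    using hr_loc[OF assms(1), of 0 x y] hr_loc[OF assms(2), of 0 x y] by auto
  then show "(c x 0 \<noteq> d x 0) = (c y 0 \<noteq> d y 0)" by simp
qed

lemma diff_card:
  assumes "has_radius c r" "has_radius d r"
  shows "card (diff_set r c d) = cnt r (\<lambda>x. c x 0 \<noteq> d x 0)"
proof -
  let ?D = "{Y. length Y = 2*r+1 \<and> c (cfg (- int r) Y) 0 \<noteq> d (cfg (- int r) Y) 0}"
  let ?\<phi> = "\<lambda>Y. restrict (cfg (- int r) Y) (N r)"
  have key: "cfg (- int r) Y (int i - int r) = Y ! i" for Y :: "'a list" and i
    by (simp add: cfg_def)
  have inj: "inj_on ?\<phi> ?D"
  proof (rule inj_onI)
    fix Y Z assume Y: "Y \<in> ?D" and Z: "Z \<in> ?D" and e: "?\<phi> Y = ?\<phi> Z"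
    show "Y = Z"
    proof (rule nth_equalityI)
      show "length Y = length Z" using Y Z by simp
      fix i assume i: "i < length Y"
      have "int i - int r \<in> N r" using i Y by (auto simp: N_def)
      then have "?\<phi> Y (int i - int r) = ?\<phi> Z (int i - int r)" using e by simp
      then show "Y ! i = Z ! i" using \<open>int i - int r \<in> N r\<close> key by simp
    qed
  qed
  have im: "?\<phi> ` ?D = diff_set r c d"
  proof (intro equalityI subsetI)
    fix w assume "w \<in> ?\<phi> ` ?D"
    then obtain Y where "Y \<in> ?D" "w = ?\<phi> Y" by blast
    then show "w \<in> diff_set r c d" unfolding diff_set_def by auto
  next
    fix w assume "w \<in> diff_set r c d"
    then obtain x where w: "w \<in> N r \<rightarrow>\<^sub>E UNIV" "restrict x (N r) = w" "c x 0 \<noteq> d x 0"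
      unfolding diff_set_def by auto
    define Y where "Y = map (\<lambda>i. x (int i - int r)) [0..<2*r+1]"
    have agree: "cfg (- int r) Y j = x j" if "- int r \<le> j \<and> j \<le> int r" for j
    proof -
      have l: "nat (j + int r) < 2*r+1" using that by (simp add: nat_less_iff)
      then show ?thesis using that by (simp add: cfg_def Y_def del: upt_Suc)
    qed
    have "?\<phi> Y = w" using w(2) agree by (auto simp: N_def intro!: restrict_ext)
    moreover have "(c (cfg (- int r) Y) 0 \<noteq> d (cfg (- int r) Y) 0) = (c x 0 \<noteq> d x 0)"
      using loc_diff[OF assms] agree by blast
    ultimately show "w \<in> ?\<phi> ` ?D" using w(3) by (intro image_eqI[where x=Y]) (auto simp: Y_def)
  qed
  show ?thesis unfolding cnt_def im[symmetric] card_image[OF inj] ..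
qed

lemma delta_cnt:
  fixes c d :: "(int \<Rightarrow> 'a::finite) \<Rightarrow> (int \<Rightarrow> 'a)"
  assumes "c \<in> CA" "d \<in> CA" "max (rad c) (rad d) \<le> T"
  shows "delta c d = real (cnt T (\<lambda>x. c x 0 \<noteq> d x 0)) / real (card (UNIV::'a set))^(2*T+1)"
proof -
  let ?r = "max (rad c) (rad d)"
  let ?q = "card (UNIV::'a set)"
  have hc: "has_radius c ?r" by (rule hr_mono[OF rad_hr[OF assms(1)]]) simp
  have hd: "has_radius d ?r" by (rule hr_mono[OF rad_hr[OF assms(2)]]) simp
  have q0: "real ?q > 0" by (simp add: card_gt_0_iff)
  have "cnt T (\<lambda>x. c x 0 \<noteq> d x 0) = ?q^(2*(T-?r)) * cnt ?r (\<lambda>x. c x 0 \<noteq> d x 0)"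
    using refine[where G="\<lambda>x. c x 0 \<noteq> d x 0" and r="?r" and T=T] loc_diff[OF hc hd] assms(3) by blast
  moreover have "2*T+1 = 2*(T-?r) + (2*?r+1)" using assms(3) by (simp only: max_def)
  ultimately show ?thesis
    unfolding delta_def diff_card[OF hc hd] using q0 by (simp add: power_add)
qed


lemma E2:
  fixes d :: "(int \<Rightarrow> 'a::finite) \<Rightarrow> (int \<Rightarrow> 'a)" and G :: "(int \<Rightarrow> 'a) \<Rightarrow> bool"
  assumes hd: "has_radius d s" and sd: "surj d"
    and loc: "\<forall>x y. (\<forall>j. - int R \<le> j \<and> j \<le> int R \<longrightarrow> x j = y j) \<longrightarrow> G x = G y"
    and RT: "R + s \<le> T"
  shows "cnt T (\<lambda>x. G (d x)) = card (UNIV::'a set)^(2*(T-s-R)) * cnt R G * card (UNIV::'a set)^(2*s)"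
proof -
  define T' where "T' = T - s"
  let ?A = "{V. length V = 2*T'+1 \<and> G (cfg (- int T') V)}"
  have loc': "\<forall>x y. (\<forall>j. - int T' \<le> j \<and> j \<le> int T' \<longrightarrow> x j = y j) \<longrightarrow> G x = G y"
  proof (intro allI impI)
    fix x y :: "int \<Rightarrow> 'a" assume h: "\<forall>j. - int T' \<le> j \<and> j \<le> int T' \<longrightarrow> x j = y j"
    have "R \<le> T'" using RT T'_def by simp
    then have "\<forall>j. - int R \<le> j \<and> j \<le> int R \<longrightarrow> x j = y j" using h by auto
    then show "G x = G y" using loc by blast
  qed
  have eq: "{Y. length Y = 2*T+1 \<and> G (d (cfg (- int T) Y))}
      = {X. length X = (2*T'+1) + 2*s \<and> img (lf d s) s X \<in> ?A}"
  proof -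
    have "G (d (cfg (- int T) X)) = G (cfg (- int T') (img (lf d s) s X))"
      if lX: "length X = 2*T+1" for X
    proof -
      have "\<forall>j. - int T' \<le> j \<and> j \<le> int T' \<longrightarrow> d (cfg (- int T) X) j = cfg (- int T') (img (lf d s) s X) j"
      proof (intro allI impI)
        fix j assume j: "- int T' \<le> j \<and> j \<le> int T'"
        have T'e: "int T' = int T - int s" using RT T'_def by simp
        have k: "nat (j + int T') < length X - 2*s" using j lX T'e by (simp add: nat_less_iff)
        have "cfg (- int T') (img (lf d s) s X) j = lf d s (take (2*s+1) (drop (nat (j + int T')) X))"
          using k by (simp add: cfg_def img_def)
        also have "\<dots> = d (cfg (- int T) X) j"
        proof -
          have e2: "nat (j + int T') = nat (j - int s - - int T)" using T'e by simp
          show ?thesis unfolding lf_def e2 using window[OF hd, of "- int T" j X] j lX T'e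
            by simp
        qed
        finally show "d (cfg (- int T) X) j = cfg (- int T') (img (lf d s) s X) j" by simp
      qed
      then show ?thesis using loc' by blast
    qed
    moreover have "2*T+1 = (2*T'+1) + 2*s" using RT T'_def by simp
    ultimately show ?thesis by auto
  qed
  have sub: "?A \<subseteq> W (2*T'+1)" by (auto simp: W_def)
  have "cnt T (\<lambda>x. G (d x)) = card ?A * card (UNIV::'a set)^(2*s)"
    unfolding cnt_def eq
    by (rule balance[where f="lf d s" and s=s, OF surj_list[OF hd sd] sub])
  also have "card ?A = cnt T' G" by (simp add: cnt_def)
  also have "cnt T' G = card (UNIV::'a set)^(2*(T'-R)) * cnt R G"
    by (rule refine[OF loc]) (use RT T'_def in simp)
  finally show ?thesis by (simp add: T'_def)
qed

lemma E1:
  fixes c d d' :: "(int \<Rightarrow> 'a::finite) \<Rightarrow> (int \<Rightarrow> 'a)"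
  assumes hc: "has_radius c r" and hd: "has_radius d s" and hd': "has_radius d' s"
    and rT: "r + s \<le> T"
  shows "cnt T (\<lambda>x. c (d x) 0 \<noteq> c (d' x) 0)
     \<le> (2*r+1) * (card (UNIV::'a set)^(2*(T-s)) * cnt s (\<lambda>x. d x 0 \<noteq> d' x 0))"
proof -
  let ?q = "card (UNIV::'a set)"
  let ?S = "{Y. length Y = 2*s+1 \<and> d (cfg (- int s) Y) 0 \<noteq> d' (cfg (- int s) Y) 0}"
  define A where "A k = {X :: 'a list. length X = 2*T+1 \<and> take (2*s+1) (drop (k + (T-r-s)) X) \<in> ?S}" for k
  have subS: "?S \<subseteq> W (2*s+1)" by (auto simp: W_def)
  have cardA: "card (A k) = ?q^(2*(T-s)) * card ?S" if k: "k < 2*r+1" for k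
  proof -
    have "2*T+1 = (k + (T-r-s)) + (2*s+1) + (T+r-s-k)" using k rT by simp
    moreover have "(k + (T-r-s)) + (T+r-s-k) = 2*(T-s)" using k rT by simp
    ultimately show ?thesis unfolding A_def using card_mid[OF subS, of "k + (T-r-s)" "T+r-s-k"]
      by simp
  qed
  have finA: "finite (A k)" for k
    by (rule finite_subset[OF _ finite_W[of "2*T+1"]]) (auto simp: A_def W_def)
  have inc: "{Y. length Y = 2*T+1 \<and> c (d (cfg (- int T) Y)) 0 \<noteq> c (d' (cfg (- int T) Y)) 0}
      \<subseteq> (\<Union>k\<in>{..<2*r+1}. A k)"
  proof
    fix X assume "X \<in> {Y. length Y = 2*T+1 \<and> c (d (cfg (- int T) Y)) 0 \<noteq> c (d' (cfg (- int T) Y)) 0}"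
    then have lX: "length X = 2*T+1" and ne: "c (d (cfg (- int T) X)) 0 \<noteq> c (d' (cfg (- int T) X)) 0"
      by auto
    obtain j where j: "- int r \<le> j" "j \<le> int r" and nej: "d (cfg (- int T) X) j \<noteq> d' (cfg (- int T) X) j"
      using hr_loc[OF hc, of 0 "d (cfg (- int T) X)" "d' (cfg (- int T) X)"] ne by force
    define k where "k = nat (j + int r)"
    have k: "k < 2*r+1" using j by (simp add: k_def nat_less_iff)
    have ke: "nat (j - int s - - int T) = k + (T-r-s)" using j rT by (simp add: k_def nat_eq_iff)
    have w1: "d (cfg (- int T) X) j = d (cfg (- int s) (take (2*s+1) (drop (k + (T-r-s)) X))) 0"
      using window[OF hd, of "- int T" j X] j lX rT ke by simp
    have w2: "d' (cfg (- int T) X) j = d' (cfg (- int s) (take (2*s+1) (drop (k + (T-r-s)) X))) 0"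
      using window[OF hd', of "- int T" j X] j lX rT ke by simp
    have mn: "min (length X - (k+(T-r-s))) (2*s+1) = 2*s+1" using lX k rT by simp
    have "X \<in> A k" unfolding A_def using lX nej w1 w2 mn by simp
    then show "X \<in> (\<Union>k\<in>{..<2*r+1}. A k)" using k by blast
  qed
  have "cnt T (\<lambda>x. c (d x) 0 \<noteq> c (d' x) 0) \<le> card (\<Union>k\<in>{..<2*r+1}. A k)"
    unfolding cnt_def by (rule card_mono[OF _ inc]) (simp add: finA)
  also have "\<dots> \<le> (\<Sum>k\<in>{..<2*r+1}. card (A k))" by (rule card_UN_le) simp
  also have "\<dots> = (\<Sum>k\<in>{..<2*r+1}. ?q^(2*(T-s)) * card ?S)" by (rule sum.cong) (auto simp: cardA)
  also have "\<dots> = (2*r+1) * (?q^(2*(T-s)) * cnt s (\<lambda>x. d x 0 \<noteq> d' x 0))"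
    by (simp add: cnt_def)
  finally show ?thesis .
qed


lemma comp_CA: "c \<in> CA \<Longrightarrow> d \<in> CA \<Longrightarrow> c \<circ> d \<in> CA"
  unfolding CA_def using hr_comp by blast

theorem mainTheorem4:
  assumes "card (UNIV :: 'a::finite set) \<ge> 2"
  shows "\<forall>c \<in> (CA :: ((int \<Rightarrow> 'a) \<Rightarrow> (int \<Rightarrow> 'a)) set). \<forall>d \<in> SUR. \<forall>\<epsilon>>0. \<exists>\<eta>>0.
           \<forall>c' \<in> CA. \<forall>d' \<in> SUR. delta c c' < \<eta> \<and> delta d d' < \<eta> \<longrightarrow>
             delta (c \<circ> d) (c' \<circ> d') < \<epsilon>"
proof (intro ballI allI impI)
  fix c :: "(int \<Rightarrow> 'a) \<Rightarrow> (int \<Rightarrow> 'a)" and d :: "(int \<Rightarrow> 'a) \<Rightarrow> (int \<Rightarrow> 'a)" and \<epsilon> :: real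
  assume cCA: "c \<in> CA" and dS: "d \<in> SUR" and eps: "\<epsilon> > 0"
  define rc where "rc = rad c"
  define \<eta> where "\<eta> = \<epsilon> / (2 * real rc + 2)"
  have eta: "\<eta> > 0" using eps by (simp add: \<eta>_def add_pos_nonneg)
  show "\<exists>\<eta>>0. \<forall>c' \<in> CA. \<forall>d' \<in> SUR. delta c c' < \<eta> \<and> delta d d' < \<eta> \<longrightarrow>
             delta (c \<circ> d) (c' \<circ> d') < \<epsilon>"
  proof (intro exI[of _ \<eta>] conjI eta ballI impI)
    fix c' d' :: "(int \<Rightarrow> 'a) \<Rightarrow> (int \<Rightarrow> 'a)"
    assume c'CA: "c' \<in> CA" and d'S: "d' \<in> SUR" and close: "delta c c' < \<eta> \<and> delta d d' < \<eta>"
    have dCA: "d \<in> CA" and d'CA: "d' \<in> CA" and sd': "surj d'" using dS d'S by (auto simp: SUR_def)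
    define Rc where "Rc = max (rad c) (rad c')"
    define Rd where "Rd = max (rad d) (rad d')"
    define Ro where "Ro = max (rad (c \<circ> d)) (rad (c' \<circ> d'))"
    define T where "T = Rc + Rd + Ro"
    let ?q = "card (UNIV::'a set)"
    define Q where "Q = real ?q"
    have Q0: "Q > 0" by (simp add: Q_def card_gt_0_iff)
    have hc: "has_radius c rc" using rad_hr[OF cCA] by (simp add: rc_def)
    have hcR: "has_radius c Rc" "has_radius c' Rc"
      using hr_mono[OF rad_hr[OF cCA]] hr_mono[OF rad_hr[OF c'CA]] by (auto simp: Rc_def)
    have hdR: "has_radius d Rd" "has_radius d' Rd"
      using hr_mono[OF rad_hr[OF dCA]] hr_mono[OF rad_hr[OF d'CA]] by (auto simp: Rd_def)
    have rcRc: "rc \<le> Rc" by (simp add: rc_def Rc_def)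
    have D0: "delta (c \<circ> d) (c' \<circ> d') = real (cnt T (\<lambda>x. c (d x) 0 \<noteq> c' (d' x) 0)) / Q^(2*T+1)"
      using delta_cnt[OF comp_CA[OF cCA dCA] comp_CA[OF c'CA d'CA], of T]
      by (simp add: T_def Ro_def Q_def)
    have Dc: "delta c c' = real (cnt Rc (\<lambda>x. c x 0 \<noteq> c' x 0)) / Q^(2*Rc+1)"
      using delta_cnt[OF cCA c'CA, of Rc] by (simp add: Rc_def Q_def)
    have Dd: "delta d d' = real (cnt Rd (\<lambda>x. d x 0 \<noteq> d' x 0)) / Q^(2*Rd+1)"
      using delta_cnt[OF dCA d'CA, of Rd] by (simp add: Rd_def Q_def)
    have split: "cnt T (\<lambda>x. c (d x) 0 \<noteq> c' (d' x) 0)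
        \<le> cnt T (\<lambda>x. c (d x) 0 \<noteq> c (d' x) 0) + cnt T (\<lambda>x. c (d' x) 0 \<noteq> c' (d' x) 0)"
    proof -
      have fin: "finite {Y :: 'a list. length Y = 2*T+1 \<and> P Y}" for P
        by (rule finite_subset[OF _ finite_W[of "2*T+1"]]) (auto simp: W_def)
      have "cnt T (\<lambda>x. c (d x) 0 \<noteq> c' (d' x) 0) \<le>
          card ({Y. length Y = 2*T+1 \<and> c (d (cfg (- int T) Y)) 0 \<noteq> c (d' (cfg (- int T) Y)) 0}
              \<union> {Y. length Y = 2*T+1 \<and> c (d' (cfg (- int T) Y)) 0 \<noteq> c' (d' (cfg (- int T) Y)) 0})"
        unfolding cnt_def by (rule card_mono) (use fin in auto)
      also have "\<dots> \<le> cnt T (\<lambda>x. c (d x) 0 \<noteq> c (d' x) 0) + cnt T (\<lambda>x. c (d' x) 0 \<noteq> c' (d' x) 0)"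
        unfolding cnt_def by (rule card_Un_le)
      finally show ?thesis .
    qed
    have b1: "cnt T (\<lambda>x. c (d x) 0 \<noteq> c (d' x) 0)
        \<le> (2*rc+1) * (?q^(2*(T-Rd)) * cnt Rd (\<lambda>x. d x 0 \<noteq> d' x 0))"
      by (rule E1[OF hc hdR]) (use rcRc in \<open>simp add: T_def\<close>)
    have b2: "cnt T (\<lambda>x. c (d' x) 0 \<noteq> c' (d' x) 0)
        = ?q^(2*(T-Rd-Rc)) * cnt Rc (\<lambda>x. c x 0 \<noteq> c' x 0) * ?q^(2*Rd)"
      using E2[where G="\<lambda>y. c y 0 \<noteq> c' y 0", OF hdR(2) sd' loc_diff[OF hcR], of T]
      by (simp add: T_def)
    have eT1: "Q^(2*T+1) = Q^(2*(T-Rd)) * Q^(2*Rd+1)"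
    proof -
      have "2*T+1 = 2*(T-Rd) + (2*Rd+1)" by (simp add: T_def)
      then show ?thesis by (simp only: power_add)
    qed
    have eT2: "Q^(2*T+1) = Q^(2*(T-Rd-Rc)) * Q^(2*Rc+1) * Q^(2*Rd)"
    proof -
      have "2*T+1 = 2*(T-Rd-Rc) + (2*Rc+1) + 2*Rd" by (simp add: T_def)
      then show ?thesis by (simp only: power_add)
    qed
    have "delta (c \<circ> d) (c' \<circ> d') \<le>
        (real ((2*rc+1) * (?q^(2*(T-Rd)) * cnt Rd (\<lambda>x. d x 0 \<noteq> d' x 0)))
         + real (?q^(2*(T-Rd-Rc)) * cnt Rc (\<lambda>x. c x 0 \<noteq> c' x 0) * ?q^(2*Rd))) / Q^(2*T+1)"
    proof -
      have nle: "cnt T (\<lambda>x. c (d x) 0 \<noteq> c' (d' x) 0) \<le> (2*rc+1) * (?q^(2*(T-Rd)) * cnt Rd (\<lambda>x. d x 0 \<noteq> d' x 0))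
         + ?q^(2*(T-Rd-Rc)) * cnt Rc (\<lambda>x. c x 0 \<noteq> c' x 0) * ?q^(2*Rd)"
        using split b1 b2 by linarith
      then have "real (cnt T (\<lambda>x. c (d x) 0 \<noteq> c' (d' x) 0)) \<le> real ((2*rc+1) * (?q^(2*(T-Rd)) * cnt Rd (\<lambda>x. d x 0 \<noteq> d' x 0)))
         + real (?q^(2*(T-Rd-Rc)) * cnt Rc (\<lambda>x. c x 0 \<noteq> c' x 0) * ?q^(2*Rd))"
        by (simp only: of_nat_add[symmetric] of_nat_le_iff)
      then show ?thesis unfolding D0 using Q0 by (intro divide_right_mono) auto
    qed
    also have "\<dots> = (2*real rc+1) * delta d d' + delta c c'"
    proof -
      define a where "a = real (cnt Rd (\<lambda>x. d x 0 \<noteq> d' x 0))"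
      define b where "b = real (cnt Rc (\<lambda>x. c x 0 \<noteq> c' x 0))"
      have p1: "Q^(2*(T-Rd)) > 0" "Q^(2*Rd+1) > 0" "Q^(2*(T-Rd-Rc)) > 0" "Q^(2*Rc+1) > 0" "Q^(2*Rd) > 0"
        using Q0 by simp_all
      have l: "real ((2*rc+1) * (?q^(2*(T-Rd)) * cnt Rd (\<lambda>x. d x 0 \<noteq> d' x 0))) / Q^(2*T+1)
          = (2*real rc+1) * (a / Q^(2*Rd+1))"
      proof -
        have "real ((2*rc+1) * (?q^(2*(T-Rd)) * cnt Rd (\<lambda>x. d x 0 \<noteq> d' x 0)))
           = (2*real rc+1) * (Q^(2*(T-Rd)) * a)" by (simp add: Q_def a_def algebra_simps)
        moreover have "(2*real rc+1) * (Q^(2*(T-Rd)) * a) / (Q^(2*(T-Rd)) * Q^(2*Rd+1))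
           = (2*real rc+1) * (a / Q^(2*Rd+1))" using p1(1) by simp
        ultimately show ?thesis unfolding eT1 by simp
      qed
      have r: "real (?q^(2*(T-Rd-Rc)) * cnt Rc (\<lambda>x. c x 0 \<noteq> c' x 0) * ?q^(2*Rd)) / Q^(2*T+1)
          = b / Q^(2*Rc+1)"
      proof -
        have "real (?q^(2*(T-Rd-Rc)) * cnt Rc (\<lambda>x. c x 0 \<noteq> c' x 0) * ?q^(2*Rd))
           = Q^(2*(T-Rd-Rc)) * b * Q^(2*Rd)" by (simp add: Q_def b_def)
        moreover have "Q^(2*(T-Rd-Rc)) * b * Q^(2*Rd) / (Q^(2*(T-Rd-Rc)) * Q^(2*Rc+1) * Q^(2*Rd))
           = b / Q^(2*Rc+1)" using p1 by simp
        ultimately show ?thesis unfolding eT2 by simp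
      qed
      show ?thesis unfolding add_divide_distrib l r Dd Dc a_def b_def ..
    qed
    also have "\<dots> < (2*real rc+1) * \<eta> + \<eta>"
      using close by (intro add_le_less_mono mult_left_mono) auto
    also have "\<dots> = (2*real rc+2) * \<eta>" by (simp add: algebra_simps)
    also have "\<dots> = \<epsilon>" unfolding \<eta>_def by (simp add: add_pos_nonneg)
    finally show "delta (c \<circ> d) (c' \<circ> d') < \<epsilon>" .
  qed
qed

end
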